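(* Let $\mathcal{G}$ be a finite-dimensional Lie algebra with Levi–Malcev decomposition $\mathcal{G}=N\ltimes S$, where $N$ is the radical and $S$ a semisimple (Levi) subalgebra, and let $\mathcal{S}$ be a finite abelian semigroup. Let $\mathcal{G}_{\mathcal{S}}=\mathcal{S}\otimes\mathcal{G}$ be the $\mathcal{S}$-expanded algebra, $E_N=\mathcal{S}\otimes N$ and $E_S=\mathcal{S}\otimes S$, so that $E_S$ is a subalgebra (the expansion of $S$), and let $E_S=N'\ltimes S_{\mathrm{exp}}$ be a Levi–Malcev decomposition of $E_S$, with $N'$ the radical of $E_S$ and $S_{\mathrm{exp}}$ semisimple. Then $N_{\mathrm{exp}}=E_N+N'$ is the radical of $\mathcal{G}_{\mathcal{S}}$, and $\mathcal{G}_{\mathcal{S}}=N_{\mathrm{exp}}\ltimes S_{\mathrm{exp}}$ is a Levi–Malcev decomposition of $\mathcal{G}_{\mathcal{S}}$.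
   Context: For a Lie algebra $\mathcal{G}$ with basis $\{X_i\}$, $[X_i,X_j]=C_{ij}^kX_k$, and a finite abelian semigroup $\mathcal{S}=\{\lambda_\alpha\}$ with 2-selector $K_{\alpha\beta}^\gamma$ ($=1$ if $\lambda_\alpha\lambda_\beta=\lambda_\gamma$, else $0$), the expanded algebra $\mathcal{S}\otimes\mathcal{G}$ has basis $\lambda_\alpha\otimes X_i$ and bracket $[\lambda_\alpha\otimes X_i,\lambda_\beta\otimes X_j]=K_{\alpha\beta}^\gamma C_{ij}^k\,\lambda_\gamma\otimes X_k$; for a subspace $V\subset\mathcal{G}$, $\mathcal{S}\otimes V$ denotes the span of $\lambda_\alpha\otimes v$, $v\in V$. The radical of a Lie algebra is its maximal solvable ideal; a Levi–Malcev decomposition writes the algebra as a semidirect sum of its radical and a semisimple subalgebra. *)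

theory Defs
  imports Main
begin

text \<open>A vector of a Lie algebra with
  basis indexed by the finite type 'a over the field 'k is a function 'a \<Rightarrow> 'k.
  A bracket is any binary operation on such vectors; subspaces, ideals, derived series,
  solvability, radical, semisimplicity and Levi-Malcev decompositions are defined
  relative to a given bracket.\<close>

definition vzero :: "'a \<Rightarrow> 'k::field" where
  "vzero = (\<lambda>_. 0)"

definition vadd :: "('a \<Rightarrow> 'k::field) \<Rightarrow> ('a \<Rightarrow> 'k) \<Rightarrow> ('a \<Rightarrow> 'k)" where
  "vadd x y = (\<lambda>a. x a + y a)"

definition vscale :: "'k::field \<Rightarrow> ('a \<Rightarrow> 'k) \<Rightarrow> ('a \<Rightarrow> 'k)" where
  "vscale c x = (\<lambda>a. c * x a)"

definition is_subspace :: "('a \<Rightarrow> 'k::field) set \<Rightarrow> bool" where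
  "is_subspace V \<longleftrightarrow> vzero \<in> V \<and> (\<forall>x\<in>V. \<forall>y\<in>V. vadd x y \<in> V)
      \<and> (\<forall>c. \<forall>x\<in>V. vscale c x \<in> V)"

definition lspan :: "('a \<Rightarrow> 'k::field) set \<Rightarrow> ('a \<Rightarrow> 'k) set" where
  "lspan A = \<Inter>{W. is_subspace W \<and> A \<subseteq> W}"

definition ssum :: "('a \<Rightarrow> 'k::field) set \<Rightarrow> ('a \<Rightarrow> 'k) set \<Rightarrow> ('a \<Rightarrow> 'k) set" where
  "ssum U V = {vadd u v | u v. u \<in> U \<and> v \<in> V}"

type_synonym ('a, 'k) bracket = "('a \<Rightarrow> 'k) \<Rightarrow> ('a \<Rightarrow> 'k) \<Rightarrow> ('a \<Rightarrow> 'k)"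

definition is_lie_bracket :: "('a, 'k::field) bracket \<Rightarrow> bool" where
  "is_lie_bracket br \<longleftrightarrow>
     (\<forall>x y z. br (vadd x y) z = vadd (br x z) (br y z)) \<and>
     (\<forall>x y z. br x (vadd y z) = vadd (br x y) (br x z)) \<and>
     (\<forall>c x y. br (vscale c x) y = vscale c (br x y)) \<and>
     (\<forall>c x y. br x (vscale c y) = vscale c (br x y)) \<and>
     (\<forall>x. br x x = vzero) \<and>
     (\<forall>x y z. vadd (br x (br y z)) (vadd (br y (br z x)) (br z (br x y))) = vzero)"

definition is_subalgebra :: "('a, 'k::field) bracket \<Rightarrow> ('a \<Rightarrow> 'k) set \<Rightarrow> bool" where
  "is_subalgebra br V \<longleftrightarrow> is_subspace V \<and> (\<forall>x\<in>V. \<forall>y\<in>V. br x y \<in> V)"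

definition is_ideal :: "('a, 'k::field) bracket \<Rightarrow> ('a \<Rightarrow> 'k) set \<Rightarrow> ('a \<Rightarrow> 'k) set \<Rightarrow> bool" where
  "is_ideal br L I \<longleftrightarrow> is_subspace I \<and> I \<subseteq> L \<and> (\<forall>x\<in>L. \<forall>y\<in>I. br x y \<in> I)"

fun derived :: "('a, 'k::field) bracket \<Rightarrow> ('a \<Rightarrow> 'k) set \<Rightarrow> nat \<Rightarrow> ('a \<Rightarrow> 'k) set" where
  "derived br V 0 = V"
| "derived br V (Suc n) =
     lspan {br x y | x y. x \<in> derived br V n \<and> y \<in> derived br V n}"

definition is_solvable :: "('a, 'k::field) bracket \<Rightarrow> ('a \<Rightarrow> 'k) set \<Rightarrow> bool" where
  "is_solvable br V \<longleftrightarrow> (\<exists>n. derived br V n = {vzero})"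

definition is_radical :: "('a, 'k::field) bracket \<Rightarrow> ('a \<Rightarrow> 'k) set \<Rightarrow> ('a \<Rightarrow> 'k) set \<Rightarrow> bool" where
  "is_radical br L R \<longleftrightarrow> is_ideal br L R \<and> is_solvable br R \<and>
     (\<forall>I. is_ideal br L I \<and> is_solvable br I \<and> R \<subseteq> I \<longrightarrow> I = R)"

definition is_semisimple :: "('a, 'k::field) bracket \<Rightarrow> ('a \<Rightarrow> 'k) set \<Rightarrow> bool" where
  "is_semisimple br S \<longleftrightarrow> is_subalgebra br S \<and>
     (\<forall>I. is_ideal br S I \<and> is_solvable br I \<longrightarrow> I = {vzero})"

definition is_levi_decomp :: "('a, 'k::field) bracket \<Rightarrow> ('a \<Rightarrow> 'k) set \<Rightarrow> ('a \<Rightarrow> 'k) set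
    \<Rightarrow> ('a \<Rightarrow> 'k) set \<Rightarrow> bool" where
  "is_levi_decomp br L R S \<longleftrightarrow> is_subalgebra br L \<and> is_radical br L R \<and>
     is_semisimple br S \<and> S \<subseteq> L \<and> R \<inter> S = {vzero} \<and> ssum R S = L"

text \<open>Bracket from structure constants: [X_i, X_j] = C_ij^k X_k.\<close>
definition sc_bracket :: "('i \<Rightarrow> 'i \<Rightarrow> 'i \<Rightarrow> 'k::field) \<Rightarrow> ('i::finite, 'k) bracket" where
  "sc_bracket C x y = (\<lambda>k. \<Sum>i\<in>UNIV. \<Sum>j\<in>UNIV. C i j k * x i * y j)"

text \<open>S-expanded bracket on S \<otimes> G, basis \<lambda>_\<alpha> \<otimes> X_i indexed by pairs (\<alpha>, i):
  [\<lambda>_\<alpha> \<otimes> X_i, \<lambda>_\<beta> \<otimes> X_j] = K_\<alpha>\<beta>^\<gamma> C_ij^k \<lambda>_\<gamma> \<otimes> X_k.\<close>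
definition selector :: "'s::ab_semigroup_mult \<Rightarrow> 's \<Rightarrow> 's \<Rightarrow> 'k::field" where
  "selector \<alpha> \<beta> \<gamma> = (if \<alpha> * \<beta> = \<gamma> then 1 else 0)"

definition exp_bracket :: "('i \<Rightarrow> 'i \<Rightarrow> 'i \<Rightarrow> 'k::field)
    \<Rightarrow> ('s::{finite,ab_semigroup_mult} \<times> 'i::finite, 'k) bracket" where
  "exp_bracket C x y = (\<lambda>(\<gamma>, k). \<Sum>\<alpha>\<in>UNIV. \<Sum>\<beta>\<in>UNIV. \<Sum>i\<in>UNIV. \<Sum>j\<in>UNIV.
      selector \<alpha> \<beta> \<gamma> * C i j k * x (\<alpha>, i) * y (\<beta>, j))"

definition tens :: "'s \<Rightarrow> ('i \<Rightarrow> 'k::field) \<Rightarrow> ('s \<times> 'i \<Rightarrow> 'k)" where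
  "tens \<alpha> v = (\<lambda>(\<beta>, i). if \<beta> = \<alpha> then v i else 0)"

definition tens_space :: "('i \<Rightarrow> 'k::field) set \<Rightarrow> ('s \<times> 'i \<Rightarrow> 'k) set" where
  "tens_space V = lspan {tens \<alpha> v | \<alpha> v. v \<in> V}"

end

theory Submission
  imports Defs
begin

lemma vadd_apply[simp]: "vadd x y a = x a + y a" by (simp add: vadd_def)
lemma vscale_apply[simp]: "vscale c x a = c * x a" by (simp add: vscale_def)
lemma vzero_apply[simp]: "vzero a = 0" by (simp add: vzero_def)

lemma vadd_assoc: "vadd (vadd a b) c = vadd a (vadd b c)"
  by (simp add: fun_eq_iff add.assoc)
lemma vadd_zero_l: "vadd vzero x = x" by (simp add: fun_eq_iff)
lemma vadd_zero_r: "vadd x vzero = x" by (simp add: fun_eq_iff)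
lemma vadd_solve: "x = vadd e s \<Longrightarrow> s = vadd x (vscale (-1) e)"
  by (simp add: fun_eq_iff)
lemma vadd_solve2: "x = vadd e s \<Longrightarrow> e = vadd x (vscale (-1) s)"
  by (simp add: fun_eq_iff)

definition slice :: "'s \<Rightarrow> ('s \<times> 'i \<Rightarrow> 'k) \<Rightarrow> ('i \<Rightarrow> 'k)" where
  "slice a x = (\<lambda>i. x (a, i))"

definition tsp :: "('i \<Rightarrow> 'k::field) set \<Rightarrow> ('s \<times> 'i \<Rightarrow> 'k) set" where
  "tsp V = {x. \<forall>a. slice a x \<in> V}"

lemma subspace_sum:
  assumes "is_subspace V" "finite A" "\<And>a. a \<in> A \<Longrightarrow> f a \<in> V"
  shows "(\<lambda>k. \<Sum>a\<in>A. f a k) \<in> V"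
  using assms(2,3)
proof (induction A rule: finite_induct)
  case empty
  have "(\<lambda>k. \<Sum>a\<in>{}. f a k) = vzero" by (simp add: fun_eq_iff)
  then show ?case using assms(1) by (simp add: is_subspace_def)
next
  case (insert a A)
  have "(\<lambda>k. \<Sum>b\<in>insert a A. f b k) = vadd (f a) (\<lambda>k. \<Sum>b\<in>A. f b k)"
    using insert by (simp add: fun_eq_iff)
  then show ?case using insert assms(1) by (simp add: is_subspace_def)
qed

lemma lspan_subspace: "is_subspace (lspan A)"
  unfolding lspan_def is_subspace_def by auto
lemma lspan_inc: "A \<subseteq> lspan A" unfolding lspan_def by auto
lemma lspan_least: "is_subspace W \<Longrightarrow> A \<subseteq> W \<Longrightarrow> lspan A \<subseteq> W" unfolding lspan_def by auto
lemma lspan_mono: "A \<subseteq> B \<Longrightarrow> lspan A \<subseteq> lspan B" unfolding lspan_def by auto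

lemma derived_subspace: "is_subspace V \<Longrightarrow> is_subspace (derived br V n)"
  by (cases n) (auto simp: lspan_subspace)
lemma derived_mono: "A \<subseteq> B \<Longrightarrow> derived br A n \<subseteq> derived br B n"
  by (induction n) (simp, simp, rule lspan_mono, blast)
lemma derived_add: "derived br (derived br A m) n = derived br A (m + n)"
  by (induction n) auto

lemma ssum_subspace:
  assumes U: "is_subspace U" and V: "is_subspace V" shows "is_subspace (ssum U V)"
  unfolding is_subspace_def ssum_def
proof (intro conjI ballI allI)
  show "vzero \<in> {vadd u v |u v. u \<in> U \<and> v \<in> V}"
    using U V unfolding is_subspace_def by (auto intro!: exI[of _ vzero] simp: vadd_zero_l)
next
  fix x y assume "x \<in> {vadd u v |u v. u \<in> U \<and> v \<in> V}" "y \<in> {vadd u v |u v. u \<in> U \<and> v \<in> V}"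
  then obtain u v u' v' where "u \<in> U" "v \<in> V" "u' \<in> U" "v' \<in> V" "x = vadd u v" "y = vadd u' v'" by blast
  moreover have "vadd (vadd u v) (vadd u' v') = vadd (vadd u u') (vadd v v')"
    by (simp add: fun_eq_iff algebra_simps)
  ultimately show "vadd x y \<in> {vadd u v |u v. u \<in> U \<and> v \<in> V}"
    using U V unfolding is_subspace_def by blast
next
  fix c x assume "x \<in> {vadd u v |u v. u \<in> U \<and> v \<in> V}"
  then obtain u v where "u \<in> U" "v \<in> V" "x = vadd u v" by blast
  moreover have "vscale c (vadd u v) = vadd (vscale c u) (vscale c v)"
    by (simp add: fun_eq_iff algebra_simps)
  ultimately show "vscale c x \<in> {vadd u v |u v. u \<in> U \<and> v \<in> V}"
    using U V unfolding is_subspace_def by blast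
qed

lemma subspace_add: "is_subspace V \<Longrightarrow> x \<in> V \<Longrightarrow> y \<in> V \<Longrightarrow> vadd x y \<in> V"
  unfolding is_subspace_def by blast
lemma subspace_diff: "is_subspace V \<Longrightarrow> x \<in> V \<Longrightarrow> y \<in> V \<Longrightarrow> vadd x (vscale (-1) y) \<in> V"
  unfolding is_subspace_def by blast

lemma int_subspace: "is_subspace U \<Longrightarrow> is_subspace V \<Longrightarrow> is_subspace (U \<inter> V)"
  unfolding is_subspace_def by auto

lemma slice_vadd: "slice a (vadd x y) = vadd (slice a x) (slice a y)"
  by (simp add: slice_def fun_eq_iff)
lemma slice_vscale: "slice a (vscale c x) = vscale c (slice a x)"
  by (simp add: slice_def fun_eq_iff)
lemma slice_vzero: "slice a vzero = vzero"
  by (simp add: slice_def fun_eq_iff)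

lemma tsp_subspace: "is_subspace V \<Longrightarrow> is_subspace (tsp V)"
  unfolding is_subspace_def tsp_def by (auto simp: slice_vadd slice_vscale slice_vzero)

lemma tsp_zero: "tsp {vzero} = {vzero}"
proof
  show "tsp {vzero} \<subseteq> {vzero}"
  proof
    fix x assume "x \<in> tsp {vzero}"
    then have h: "slice a x = vzero" for a unfolding tsp_def by blast
    have "x (a, i) = 0" for a i
    proof -
      have "slice a x i = vzero i" using h by simp
      then show ?thesis by (simp add: slice_def)
    qed
    then show "x \<in> {vzero}" by (auto simp: fun_eq_iff)
  qed
qed (auto simp: tsp_def slice_vzero)

lemma tens_space_eq:
  assumes V: "is_subspace V"
  shows "(tens_space V :: ('s::finite \<times> 'i \<Rightarrow> 'k::field) set) = tsp V"
proof
  show "tens_space V \<subseteq> (tsp V :: ('s \<times> 'i \<Rightarrow> 'k) set)"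
    unfolding tens_space_def
  proof (rule lspan_least[OF tsp_subspace[OF V]])
    have sl: "slice b (tens a v) = (if b = a then v else vzero)" for a b :: 's and v :: "'i \<Rightarrow> 'k"
      by (simp add: slice_def tens_def fun_eq_iff)
    have z: "vzero \<in> V" using V unfolding is_subspace_def by blast
    show "{tens a v |a v. v \<in> V} \<subseteq> (tsp V :: ('s \<times> 'i \<Rightarrow> 'k) set)"
    proof clarify
      fix a :: 's and v assume v: "v \<in> V"
      show "tens a v \<in> (tsp V :: ('s \<times> 'i \<Rightarrow> 'k) set)" unfolding tsp_def
      proof (intro CollectI allI)
        fix b :: 's
        show "slice b (tens a v) \<in> V" using v z by (simp add: sl)
      qed
    qed
  qed
next
  show "(tsp V :: ('s \<times> 'i \<Rightarrow> 'k) set) \<subseteq> tens_space V"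
  proof
    fix x :: "'s \<times> 'i \<Rightarrow> 'k" assume x: "x \<in> tsp V"
    have eq: "x = (\<lambda>p. \<Sum>a\<in>UNIV. tens a (slice a x) p)"
    proof (rule ext)
      fix p :: "'s \<times> 'i"
      obtain b i where p: "p = (b, i)" by (cases p)
      show "x p = (\<Sum>a\<in>UNIV. tens a (slice a x) p)"
        by (simp add: p tens_def slice_def sum.delta')
    qed
    have "(\<lambda>p. \<Sum>a\<in>UNIV. tens a (slice a x) p) \<in> tens_space V"
      unfolding tens_space_def
    proof (rule subspace_sum[OF lspan_subspace])
      fix a
      have "tens a (slice a x) \<in> {tens \<alpha> v |\<alpha> v. v \<in> V}" using x unfolding tsp_def by blast
      then show "tens a (slice a x) \<in> lspan {tens \<alpha> v |\<alpha> v. v \<in> V}" by (rule subsetD[OF lspan_inc])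
    qed simp
    then show "x \<in> tens_space V" by (simp only: eq[symmetric])
  qed
qed

lemma B_add_left: "exp_bracket C (vadd x y) z = vadd (exp_bracket C x z) (exp_bracket C y z)"
  by (simp add: exp_bracket_def fun_eq_iff distrib_left distrib_right sum.distrib split_def)
lemma B_add_right: "exp_bracket C x (vadd y z) = vadd (exp_bracket C x y) (exp_bracket C x z)"
  by (simp add: exp_bracket_def fun_eq_iff distrib_left distrib_right sum.distrib split_def)
lemma B_expand: "exp_bracket C (vadd a b) (vadd c d) =
   vadd (vadd (vadd (exp_bracket C a c) (exp_bracket C a d)) (exp_bracket C b c)) (exp_bracket C b d)"
  by (simp add: B_add_left B_add_right fun_eq_iff add_ac)

lemma slice_B: "slice g (exp_bracket C x y) =
  (\<lambda>k. \<Sum>a\<in>UNIV. \<Sum>b\<in>UNIV. (if a * b = g then sc_bracket C (slice a x) (slice b y) else vzero) k)"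
  by (auto simp: fun_eq_iff exp_bracket_def selector_def sc_bracket_def slice_def
      intro!: sum.cong)

lemma B_in_tsp:
  assumes V: "is_subspace V" and h: "\<And>a b. sc_bracket C (slice a x) (slice b y) \<in> V"
  shows "exp_bracket C x y \<in> tsp V"
  unfolding tsp_def
proof (intro CollectI allI)
  fix g
  show "slice g (exp_bracket C x y) \<in> V"
    unfolding slice_B
    apply (rule subspace_sum[OF V], simp)
    apply (rule subspace_sum[OF V], simp)
    using V h unfolding is_subspace_def by auto
qed

lemma sc_antisym:
  assumes lie: "is_lie_bracket br"
  shows "br x y = vscale (-1) (br y x)"
proof -
  from lie have a1: "\<And>x y z. br (vadd x y) z = vadd (br x z) (br y z)"
    and a2: "\<And>x y z. br x (vadd y z) = vadd (br x y) (br x z)"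
    and a5: "\<And>x. br x x = vzero" unfolding is_lie_bracket_def by auto
  have "br (vadd x y) (vadd x y) = vadd (vadd (br x x) (br x y)) (vadd (br y x) (br y y))"
    by (simp add: a1 a2 fun_eq_iff algebra_simps)
  then have "vzero = vadd (vadd vzero (br x y)) (vadd (br y x) vzero)" by (simp only: a5)
  then have "\<And>a. br x y a + br y x a = 0" by (simp add: fun_eq_iff)
  then show ?thesis by (simp add: fun_eq_iff eq_neg_iff_add_eq_0)
qed


theorem theorem4:
  fixes C :: "'i::finite \<Rightarrow> 'i \<Rightarrow> 'i \<Rightarrow> 'k::field_char_0"
    and N S :: "('i \<Rightarrow> 'k) set"
    and N' S_exp :: "('s::{finite,ab_semigroup_mult} \<times> 'i \<Rightarrow> 'k) set"
  assumes lie: "is_lie_bracket (sc_bracket C)"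
    and levi_G: "is_levi_decomp (sc_bracket C) UNIV N S"
    and levi_ES: "is_levi_decomp (exp_bracket C) (tens_space S :: ('s \<times> 'i \<Rightarrow> 'k) set) N' S_exp"
  shows "is_radical (exp_bracket C) UNIV (ssum (tens_space N :: ('s \<times> 'i \<Rightarrow> 'k) set) N')
       \<and> is_levi_decomp (exp_bracket C) UNIV (ssum (tens_space N :: ('s \<times> 'i \<Rightarrow> 'k) set) N') S_exp"
proof -
  let ?sc = "sc_bracket C"
  let ?B = "exp_bracket C :: ('s \<times> 'i, 'k) bracket"
  let ?EN = "tens_space N :: ('s \<times> 'i \<Rightarrow> 'k) set"
  let ?ES = "tens_space S :: ('s \<times> 'i \<Rightarrow> 'k) set"
  let ?R = "ssum ?EN N'"
  from levi_G have radN: "is_radical ?sc UNIV N" and ssS: "is_semisimple ?sc S"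
    and NS0: "N \<inter> S = {vzero}" and NS: "ssum N S = UNIV"
    unfolding is_levi_decomp_def by auto
  from radN have subN: "is_subspace N" and idN: "\<And>x y. y \<in> N \<Longrightarrow> ?sc x y \<in> N"
    and solN: "is_solvable ?sc N" unfolding is_radical_def is_ideal_def by auto
  from ssS have subS: "is_subspace S" unfolding is_semisimple_def is_subalgebra_def by auto
  have idN2: "?sc x y \<in> N" if "x \<in> N" for x y
  proof -
    have "?sc y x \<in> N" using that by (rule idN)
    then have "vscale (-1) (?sc y x) \<in> N" using subN unfolding is_subspace_def by blast
    then show "?sc x y \<in> N" using sc_antisym[OF lie, of x y] by simp
  qed
  from levi_ES have subES: "is_subalgebra ?B ?ES" and radN': "is_radical ?B ?ES N'"
    and ssSe: "is_semisimple ?B S_exp" and SeES: "S_exp \<subseteq> ?ES"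
    and N'S0: "N' \<inter> S_exp = {vzero}" and N'S: "ssum N' S_exp = ?ES"
    unfolding is_levi_decomp_def by auto
  from radN' have subN': "is_subspace N'" and N'ES: "N' \<subseteq> ?ES"
    and idN': "\<And>x y. x \<in> ?ES \<Longrightarrow> y \<in> N' \<Longrightarrow> ?B x y \<in> N'"
    and solN': "is_solvable ?B N'"
    unfolding is_radical_def is_ideal_def by auto
  from radN' have maxN': "\<And>I. is_ideal ?B ?ES I \<Longrightarrow> is_solvable ?B I \<Longrightarrow> N' \<subseteq> I \<Longrightarrow> I = N'"
    unfolding is_radical_def by blast
  have subSe: "is_subspace S_exp" using ssSe unfolding is_semisimple_def is_subalgebra_def by auto
  have ENeq: "?EN = tsp N" by (rule tens_space_eq[OF subN])
  have ESeq: "?ES = tsp S" by (rule tens_space_eq[OF subS])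
  have subEN: "is_subspace ?EN" using ENeq tsp_subspace[OF subN] by simp
  have subES': "is_subspace ?ES" using subES unfolding is_subalgebra_def by auto
  have EN_l: "?B x e \<in> ?EN" if "e \<in> ?EN" for x e
    unfolding ENeq by (rule B_in_tsp[OF subN]) (use that in \<open>auto simp: ENeq tsp_def intro: idN\<close>)
  have EN_r: "?B e x \<in> ?EN" if "e \<in> ?EN" for x e
    unfolding ENeq by (rule B_in_tsp[OF subN]) (use that in \<open>auto simp: ENeq tsp_def intro: idN2\<close>)
  have dec: "\<exists>e s. e \<in> ?EN \<and> s \<in> ?ES \<and> x = vadd e s" for x
  proof -
    have "\<forall>a. \<exists>u v. u \<in> N \<and> v \<in> S \<and> slice a x = vadd u v"
      using NS unfolding ssum_def by blast
    then have "\<forall>a. \<exists>p. fst p \<in> N \<and> snd p \<in> S \<and> slice a x = vadd (fst p) (snd p)" by simp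
    from choice[OF this] obtain f where
      f: "\<forall>a. fst (f a) \<in> N \<and> snd (f a) \<in> S \<and> slice a x = vadd (fst (f a)) (snd (f a))" by blast
    define u where "u = (\<lambda>a. fst (f a))"
    define v where "v = (\<lambda>a. snd (f a))"
    have uv: "\<And>a. u a \<in> N \<and> v a \<in> S \<and> slice a x = vadd (u a) (v a)" using f by (simp add: u_def v_def)
    define e :: "'s \<times> 'i \<Rightarrow> 'k" where "e = (\<lambda>p. u (fst p) (snd p))"
    define s :: "'s \<times> 'i \<Rightarrow> 'k" where "s = (\<lambda>p. v (fst p) (snd p))"
    have "slice a e = u a" "slice a s = v a" for a by (auto simp: e_def s_def slice_def)
    then have "e \<in> ?EN" "s \<in> ?ES" using uv unfolding ENeq ESeq tsp_def by auto
    moreover have "x = vadd e s"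
    proof (rule ext)
      fix p :: "'s \<times> 'i"
      obtain a i where p: "p = (a, i)" by (cases p)
      have "slice a x i = vadd (u a) (v a) i" using uv by simp
      then show "x p = vadd e s p" by (simp add: p e_def s_def slice_def)
    qed
    ultimately show ?thesis by blast
  qed
  have ENS0: "?EN \<inter> ?ES = {vzero}"
  proof
    show "?EN \<inter> ?ES \<subseteq> {vzero}"
    proof
      fix x assume "x \<in> ?EN \<inter> ?ES"
      then have "slice a x \<in> N \<inter> S" for a unfolding ENeq ESeq tsp_def by auto
      then have h: "slice a x = vzero" for a using NS0 by auto
      have "x (a, i) = 0" for a i
      proof -
        have "slice a x i = vzero i" using h by simp
        then show ?thesis by (simp add: slice_def)
      qed
      then show "x \<in> {vzero}" by (auto simp: fun_eq_iff)
    qed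
  qed (use subEN subES' in \<open>auto simp: is_subspace_def\<close>)
  have subR: "is_subspace ?R" by (rule ssum_subspace[OF subEN subN'])
  have zEN: "vzero \<in> ?EN" and zN': "vzero \<in> N'" using subEN subN' by (auto simp: is_subspace_def)
  have ENR: "?EN \<subseteq> ?R"
  proof
    fix e assume "e \<in> ?EN"
    then show "e \<in> ?R" unfolding ssum_def using zN'
      by (intro CollectI exI[of _ e] exI[of _ vzero]) (simp add: vadd_zero_r)
  qed
  have N'R: "N' \<subseteq> ?R"
  proof
    fix e assume "e \<in> N'"
    then show "e \<in> ?R" unfolding ssum_def using zEN
      by (intro CollectI exI[of _ vzero] exI[of _ e]) (simp add: vadd_zero_l)
  qed
  have idR: "?B x y \<in> ?R" if "y \<in> ?R" for x y
  proof -
    from that obtain e n where e: "e \<in> ?EN" and n: "n \<in> N'" and y: "y = vadd e n"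
      unfolding ssum_def by blast
    obtain e1 s1 where e1: "e1 \<in> ?EN" and s1: "s1 \<in> ?ES" and x: "x = vadd e1 s1" using dec by blast
    have 1: "?B x y = vadd (?B x e) (?B x n)" by (simp add: y B_add_right)
    have 2: "?B x n = vadd (?B e1 n) (?B s1 n)" by (simp add: x B_add_left)
    have a: "vadd (?B x e) (?B e1 n) \<in> ?EN" using EN_l[OF e] EN_r[OF e1] subEN
      unfolding is_subspace_def by blast
    have "?B x y = vadd (vadd (?B x e) (?B e1 n)) (?B s1 n)" by (simp add: 1 2 vadd_assoc)
    then show ?thesis using a idN'[OF s1 n] unfolding ssum_def by blast
  qed
  have idealR: "is_ideal ?B UNIV ?R" unfolding is_ideal_def using subR idR by auto
  have derR: "derived ?B ?R n \<subseteq> ssum ?EN (derived ?B N' n)" for n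
  proof (induction n)
    case 0 show ?case by simp
  next
    case (Suc n)
    have gens: "{?B x y |x y. x \<in> derived ?B ?R n \<and> y \<in> derived ?B ?R n}
        \<subseteq> ssum ?EN (derived ?B N' (Suc n))"
    proof clarify
      fix x y assume "x \<in> derived ?B ?R n" "y \<in> derived ?B ?R n"
      then obtain e d e' d' where e: "e \<in> ?EN" and d: "d \<in> derived ?B N' n" and x: "x = vadd e d"
        and e': "e' \<in> ?EN" and d': "d' \<in> derived ?B N' n" and y: "y = vadd e' d'"
        using Suc.IH unfolding ssum_def by blast
      have "vadd (vadd (?B e e') (?B e d')) (?B d e') \<in> ?EN"
        using EN_l[OF e'] EN_r[OF e] subEN unfolding is_subspace_def by blast
      moreover have "?B d d' \<in> derived ?B N' (Suc n)"
      proof -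
        have "?B d d' \<in> {?B x y |x y. x \<in> derived ?B N' n \<and> y \<in> derived ?B N' n}"
          using d d' by blast
        then show ?thesis unfolding derived.simps(2) by (rule subsetD[OF lspan_inc])
      qed
      ultimately show "?B x y \<in> ssum ?EN (derived ?B N' (Suc n))"
        unfolding x y B_expand ssum_def by blast
    qed
    show ?case unfolding derived.simps(2)[of ?B ?R n]
      by (rule lspan_least[OF ssum_subspace[OF subEN derived_subspace[OF subN']] gens])
  qed
  have derEN: "derived ?B ?EN k \<subseteq> tsp (derived ?sc N k)" for k
  proof (induction k)
    case 0 show ?case using ENeq by simp
  next
    case (Suc k)
    have gens: "{?B x y |x y. x \<in> derived ?B ?EN k \<and> y \<in> derived ?B ?EN k}
        \<subseteq> tsp (derived ?sc N (Suc k))"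
    proof clarify
      fix x y assume "x \<in> derived ?B ?EN k" "y \<in> derived ?B ?EN k"
      then have "slice a x \<in> derived ?sc N k" "slice a y \<in> derived ?sc N k" for a
        using Suc.IH unfolding tsp_def by auto
      then show "?B x y \<in> tsp (derived ?sc N (Suc k))"
        by (intro B_in_tsp derived_subspace subN) (auto intro!: subsetD[OF lspan_inc])
    qed
    show ?case unfolding derived.simps(2)[of ?B ?EN k]
      by (rule lspan_least[OF tsp_subspace[OF derived_subspace[OF subN]] gens])
  qed
  obtain m where m: "derived ?B N' m = {vzero}" using solN' unfolding is_solvable_def by blast
  obtain k where k: "derived ?sc N k = {vzero}" using solN unfolding is_solvable_def by blast
  have "derived ?B ?R m \<subseteq> ?EN"
  proof -
    have "ssum ?EN {vzero} \<subseteq> ?EN"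
    proof
      fix z assume "z \<in> ssum ?EN {vzero}"
      then obtain u where u: "u \<in> ?EN" and z: "z = vadd u vzero" unfolding ssum_def by blast
      have "z = u" unfolding z by (rule vadd_zero_r)
      then show "z \<in> ?EN" using u by simp
    qed
    then show ?thesis using derR[of m] m by simp
  qed
  then have "derived ?B (derived ?B ?R m) k \<subseteq> derived ?B ?EN k" by (rule derived_mono)
  also have "\<dots> \<subseteq> tsp (derived ?sc N k)" by (rule derEN)
  also have "\<dots> = {vzero}" unfolding k by (rule tsp_zero)
  finally have "derived ?B ?R (m + k) \<subseteq> {vzero}" unfolding derived_add .
  moreover have "vzero \<in> derived ?B ?R (m + k)"
    using derived_subspace[OF subR] unfolding is_subspace_def by blast
  ultimately have solR: "is_solvable ?B ?R" unfolding is_solvable_def by blast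
  have maxR: "I = ?R" if idI: "is_ideal ?B UNIV I" and solI: "is_solvable ?B I" and RI: "?R \<subseteq> I" for I
  proof -
    have subI: "is_subspace I" using idI is_ideal_def by blast
    have subJ: "is_subspace (I \<inter> ?ES)" by (rule int_subspace[OF subI subES'])
    have "is_ideal ?B ?ES (I \<inter> ?ES)"
      unfolding is_ideal_def using subJ idI subES unfolding is_ideal_def is_subalgebra_def by auto
    moreover have "is_solvable ?B (I \<inter> ?ES)"
    proof -
      obtain n where n: "derived ?B I n = {vzero}" using solI unfolding is_solvable_def by blast
      have "derived ?B (I \<inter> ?ES) n \<subseteq> {vzero}" using derived_mono[of "I \<inter> ?ES" I ?B n] n by auto
      moreover have "vzero \<in> derived ?B (I \<inter> ?ES) n"
        using derived_subspace[OF subJ] unfolding is_subspace_def by blast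
      ultimately show ?thesis unfolding is_solvable_def by blast
    qed
    moreover have "N' \<subseteq> I \<inter> ?ES" using N'R RI N'ES by blast
    ultimately have J: "I \<inter> ?ES = N'" by (rule maxN')
    have "I \<subseteq> ?R"
    proof
      fix x assume xI: "x \<in> I"
      obtain e s where e: "e \<in> ?EN" and s: "s \<in> ?ES" and x: "x = vadd e s" using dec by blast
      have "s = vadd x (vscale (-1) e)" using x by (rule vadd_solve)
      moreover have "e \<in> I" using e ENR RI by blast
      ultimately have "s \<in> I" using subspace_diff[OF subI xI] by simp
      then have "s \<in> N'" using s J by blast
      then show "x \<in> ?R" using e x unfolding ssum_def by blast
    qed
    then show ?thesis using RI by blast
  qed
  have radR: "is_radical ?B UNIV ?R" unfolding is_radical_def using idealR solR maxR by blast
  have "?R \<inter> S_exp = {vzero}"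
  proof
    show "?R \<inter> S_exp \<subseteq> {vzero}"
    proof
      fix x assume "x \<in> ?R \<inter> S_exp"
      then obtain e n where e: "e \<in> ?EN" and n: "n \<in> N'" and x: "x = vadd e n" and xS: "x \<in> S_exp"
        unfolding ssum_def by blast
      have "e = vadd x (vscale (-1) n)" using x by (rule vadd_solve2)
      moreover have "x \<in> ?ES" "n \<in> ?ES" using xS SeES n N'ES by auto
      ultimately have "e \<in> ?ES" using subspace_diff[OF subES'] by simp
      then have "e = vzero" using e ENS0 by blast
      then have "x = n" using x vadd_zero_l by simp
      then show "x \<in> {vzero}" using n xS N'S0 by blast
    qed
  next
    show "{vzero} \<subseteq> ?R \<inter> S_exp" using subR subSe unfolding is_subspace_def by auto
  qed
  moreover have "ssum ?R S_exp = UNIV"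
  proof -
    have "x \<in> ssum ?R S_exp" for x
    proof -
      obtain e s where e: "e \<in> ?EN" and s: "s \<in> ?ES" and x: "x = vadd e s" using dec by blast
      from s N'S obtain n s' where n: "n \<in> N'" and s': "s' \<in> S_exp" and "s = vadd n s'"
        unfolding ssum_def by blast
      then have "x = vadd (vadd e n) s'" using x by (simp add: vadd_assoc)
      then show ?thesis using e n s' unfolding ssum_def by blast
    qed
    then show ?thesis by auto
  qed
  moreover have "is_subalgebra ?B UNIV" unfolding is_subalgebra_def is_subspace_def by auto
  ultimately show ?thesis using radR ssSe unfolding is_levi_decomp_def by simp
qed

end
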